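(* Let $\mathcal I$ be an independent family. The following are equivalent: (1) $\mathcal I$ is densely maximal; (2) $\mathcal I$ has a unique diagonalization filter, and it equals the density filter $\mathrm{fil}(\mathcal I)$.
   Context: A family $\mathcal I \subseteq [\omega]^\omega$ is independent if for all finite disjoint $\mathcal A, \mathcal B \subseteq \mathcal I$ the set $\bigcap \mathcal A \setminus \bigcup \mathcal B$ is infinite. $\mathsf{FF}(\mathcal I)$ is the set of finite partial functions $h:\mathcal I \to 2$; $\mathcal I^h := \bigcap_{A \in \mathrm{dom}(h)} A^{h(A)}$ with $A^0 = A$, $A^1 = \omega\setminus A$. $\mathcal I$ is densely maximal if for every $X \in [\omega]^\omega$ and every $h \in \mathsf{FF}(\mathcal I)$ there is $h' \supseteq h$ in $\mathsf{FF}(\mathcal I)$ with $\mathcal I^{h'} \setminus X$ or $\mathcal I^{h'} \cap X$ finite. The density filter $\mathrm{fil}(\mathcal I)$ is the set of $X \in [\omega]^\omega$ such that for every $h \in \mathsf{FF}(\mathcal I)$ there is $h' \supseteq h$ in $\mathsf{FF}(\mathcal I)$ with $\mathcal I^{h'} \setminus X$ finite. A diagonalization filter for $\mathcal I$ is a filter $\mathcal F$ on $\omega$ which is maximal (under inclusion) with respect to the property that every $X\in\mathcal F$ has infinite intersection with every $\mathcal I^h$, $h \in \mathsf{FF}(\mathcal I)$. *)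

theory Defs
  imports Main
begin

definition independent :: "nat set set \<Rightarrow> bool" where
  "independent \<I> \<longleftrightarrow> (\<forall>A\<in>\<I>. infinite A) \<and>
     (\<forall>\<A> \<B>. finite \<A> \<and> finite \<B> \<and> \<A> \<subseteq> \<I> \<and> \<B> \<subseteq> \<I> \<and> \<A> \<inter> \<B> = {}
        \<longrightarrow> infinite (\<Inter>\<A> - \<Union>\<B>))"

definition FF :: "nat set set \<Rightarrow> (nat set \<rightharpoonup> nat) set" where
  "FF \<I> = {h. finite (dom h) \<and> dom h \<subseteq> \<I> \<and> ran h \<subseteq> {0, 1}}"

definition power_set :: "nat set \<Rightarrow> nat \<Rightarrow> nat set" where
  "power_set A i = (if i = 0 then A else UNIV - A)"

definition Ih :: "(nat set \<rightharpoonup> nat) \<Rightarrow> nat set" where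
  "Ih h = (\<Inter>A\<in>dom h. power_set A (the (h A)))"

definition densely_maximal :: "nat set set \<Rightarrow> bool" where
  "densely_maximal \<I> \<longleftrightarrow> (\<forall>X. infinite X \<longrightarrow> (\<forall>h\<in>FF \<I>. \<exists>h'\<in>FF \<I>. h \<subseteq>\<^sub>m h' \<and>
      (finite (Ih h' - X) \<or> finite (Ih h' \<inter> X))))"

definition density_filter :: "nat set set \<Rightarrow> nat set set" where
  "density_filter \<I> = {X. infinite X \<and> (\<forall>h\<in>FF \<I>. \<exists>h'\<in>FF \<I>. h \<subseteq>\<^sub>m h' \<and> finite (Ih h' - X))}"

definition set_filter :: "nat set set \<Rightarrow> bool" where
  "set_filter F \<longleftrightarrow> UNIV \<in> F \<and> {} \<notin> F \<and>
     (\<forall>X Y. X \<in> F \<and> Y \<in> F \<longrightarrow> X \<inter> Y \<in> F) \<and>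
     (\<forall>X Y. X \<in> F \<and> X \<subseteq> Y \<longrightarrow> Y \<in> F)"

definition meets_all_Ih :: "nat set set \<Rightarrow> nat set set \<Rightarrow> bool" where
  "meets_all_Ih \<I> F \<longleftrightarrow> (\<forall>X\<in>F. \<forall>h\<in>FF \<I>. infinite (X \<inter> Ih h))"

definition diagonalization_filter :: "nat set set \<Rightarrow> nat set set \<Rightarrow> bool" where
  "diagonalization_filter \<I> F \<longleftrightarrow> set_filter F \<and> meets_all_Ih \<I> F \<and>
     (\<forall>G. set_filter G \<and> meets_all_Ih \<I> G \<and> F \<subseteq> G \<longrightarrow> G = F)"

end

theory Submission
  imports Defs
begin

lemma Ih_mono: assumes "h \<subseteq>\<^sub>m h'" shows "Ih h' \<subseteq> Ih h"
proof
  fix x assume x: "x \<in> Ih h'"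
  show "x \<in> Ih h" unfolding Ih_def
  proof
    fix A assume A: "A \<in> dom h"
    have e: "h A = h' A" using assms A unfolding map_le_def by blast
    have d: "A \<in> dom h'" using A e by (simp add: domIff)
    have "x \<in> power_set A (the (h' A))" using x d unfolding Ih_def by (rule INT_D)
    then show "x \<in> power_set A (the (h A))" using e by simp
  qed
qed

lemma inf_split: "infinite A \<Longrightarrow> A \<subseteq> B \<union> C \<Longrightarrow> finite C \<Longrightarrow> infinite B"
  by (metis finite_UnI finite_subset)

lemma Ih_empty[simp]: "Ih Map.empty = UNIV"
  unfolding Ih_def by simp

lemma empty_FF[simp]: "Map.empty \<in> FF I"
  unfolding FF_def by simp

lemma Ih_eq:
  assumes "h \<in> FF I"
  shows "Ih h = \<Inter>{A\<in>dom h. h A = Some 0} - \<Union>{A\<in>dom h. h A = Some 1}"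
proof -
  have r: "ran h \<subseteq> {0,1}" using assms by (simp add: FF_def)
  have v: "v = 0 \<or> v = 1" if "h A = Some v" for A v
  proof -
    have "v \<in> ran h" using that by (rule ranI)
    then show ?thesis using r by blast
  qed
  have P: "x \<in> power_set A (the (h A))" if "x \<in> Ih h" "A \<in> dom h" for x A
    using that unfolding Ih_def by (rule INT_D)
  show ?thesis
  proof (rule set_eqI, rule iffI)
    fix x assume x: "x \<in> Ih h"
    show "x \<in> \<Inter>{A\<in>dom h. h A = Some 0} - \<Union>{A\<in>dom h. h A = Some 1}"
    proof
      show "x \<in> \<Inter>{A\<in>dom h. h A = Some 0}"
      proof
        fix A assume "A \<in> {A\<in>dom h. h A = Some 0}"
        then have a: "A \<in> dom h" and b: "h A = Some 0" by auto
        have "x \<in> power_set A (the (h A))" using P[OF x a] .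
        then show "x \<in> A" using b by (simp add: power_set_def)
      qed
      show "x \<notin> \<Union>{A\<in>dom h. h A = Some 1}"
      proof
        assume "x \<in> \<Union>{A\<in>dom h. h A = Some 1}"
        then obtain A where a: "A \<in> dom h" and b: "h A = Some 1" and c: "x \<in> A" by blast
        have "x \<in> power_set A (the (h A))" using P[OF x a] .
        then show False using b c by (simp add: power_set_def)
      qed
    qed
  next
    fix x assume x: "x \<in> \<Inter>{A\<in>dom h. h A = Some 0} - \<Union>{A\<in>dom h. h A = Some 1}"
    show "x \<in> Ih h"
      unfolding Ih_def
    proof (rule INT_I)
      fix A assume A: "A \<in> dom h"
      then obtain v where hv: "h A = Some v" by blast
      show "x \<in> power_set A (the (h A))"
      proof (cases "v = 0")
        case True
        then have "A \<in> {A\<in>dom h. h A = Some 0}" using A hv by simp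
        then have "x \<in> A" using x by blast
        then show ?thesis using hv True by (simp add: power_set_def)
      next
        case False
        then have "v = 1" using v[OF hv] by simp
        then have "A \<in> {A\<in>dom h. h A = Some 1}" using A hv by simp
        then have "x \<notin> A" using x by blast
        then show ?thesis using hv False by (simp add: power_set_def)
      qed
    qed
  qed
qed

lemma Ih_inf:
  assumes ind: "independent I" and h: "h \<in> FF I"
  shows "infinite (Ih h)"
proof -
  have fin: "finite (dom h)" and sub: "dom h \<subseteq> I" using h unfolding FF_def by auto
  have "infinite (\<Inter>{A\<in>dom h. h A = Some 0} - \<Union>{A\<in>dom h. h A = Some 1})"
    using ind unfolding independent_def
    apply (elim conjE)
    apply (erule allE[of _ "{A\<in>dom h. h A = Some 0}"])
    apply (erule allE[of _ "{A\<in>dom h. h A = Some 1}"])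
    using fin sub by auto
  then show ?thesis using Ih_eq[OF h] by simp
qed

lemma fil_props:
  assumes ind: "independent I"
  shows "set_filter (density_filter I) \<and> meets_all_Ih I (density_filter I)"
proof -
  have univ: "UNIV \<in> density_filter I"
  proof -
    have "\<forall>h\<in>FF I. \<exists>h'\<in>FF I. h \<subseteq>\<^sub>m h' \<and> finite (Ih h' - UNIV)"
    proof
      fix h assume "h \<in> FF I"
      then show "\<exists>h'\<in>FF I. h \<subseteq>\<^sub>m h' \<and> finite (Ih h' - UNIV)"
        using map_le_refl[of h] by (intro bexI[of _ h]) simp_all
    qed
    then show ?thesis unfolding density_filter_def by simp
  qed
  have int: "X \<inter> Y \<in> density_filter I" if X: "X \<in> density_filter I" and Y: "Y \<in> density_filter I" for X Y
  proof -
    have fa: "\<forall>h\<in>FF I. \<exists>h'\<in>FF I. h \<subseteq>\<^sub>m h' \<and> finite (Ih h' - (X \<inter> Y))"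
    proof
      fix h assume h: "h \<in> FF I"
      obtain h1 where h1: "h1 \<in> FF I" "h \<subseteq>\<^sub>m h1" "finite (Ih h1 - X)"
        using X h unfolding density_filter_def by blast
      obtain h2 where h2: "h2 \<in> FF I" "h1 \<subseteq>\<^sub>m h2" "finite (Ih h2 - Y)"
        using Y h1(1) unfolding density_filter_def by blast
      have "Ih h2 - (X \<inter> Y) \<subseteq> (Ih h1 - X) \<union> (Ih h2 - Y)" using Ih_mono[OF h2(2)] by auto
      moreover have "finite ((Ih h1 - X) \<union> (Ih h2 - Y))" using h1(3) h2(3) by simp
      ultimately have "finite (Ih h2 - (X \<inter> Y))" by (rule finite_subset)
      then show "\<exists>h'\<in>FF I. h \<subseteq>\<^sub>m h' \<and> finite (Ih h' - (X \<inter> Y))"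
        using h2(1) map_le_trans[OF h1(2) h2(2)] by blast
    qed
    obtain h' where h': "h' \<in> FF I" "finite (Ih h' - (X \<inter> Y))" using fa empty_FF by blast
    have "infinite (Ih h')" using Ih_inf[OF ind h'(1)] .
    moreover have "Ih h' \<subseteq> (Ih h' - (X \<inter> Y)) \<union> (X \<inter> Y)" by blast
    ultimately have "infinite (X \<inter> Y)"
      using h'(2) by (metis inf_split sup_commute)
    then show ?thesis using fa unfolding density_filter_def by blast
  qed
  have up: "Y \<in> density_filter I" if XY: "X \<in> density_filter I" "X \<subseteq> Y" for X Y
  proof -
    have "infinite X" using that(1) unfolding density_filter_def by simp
    then have "infinite Y" using that(2) finite_subset by metis
    moreover have "\<forall>h\<in>FF I. \<exists>h'\<in>FF I. h \<subseteq>\<^sub>m h' \<and> finite (Ih h' - Y)"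
    proof
      fix h assume "h \<in> FF I"
      then obtain h' where "h'\<in>FF I" "h \<subseteq>\<^sub>m h'" "finite (Ih h' - X)"
        using XY(1) unfolding density_filter_def by blast
      moreover have "Ih h' - Y \<subseteq> Ih h' - X" using XY(2) by blast
      ultimately show "\<exists>h'\<in>FF I. h \<subseteq>\<^sub>m h' \<and> finite (Ih h' - Y)"
        by (metis finite_subset)
    qed
    ultimately show ?thesis unfolding density_filter_def by blast
  qed
  have meets: "meets_all_Ih I (density_filter I)"
    unfolding meets_all_Ih_def
  proof (intro ballI)
    fix X h assume X: "X \<in> density_filter I" and h: "h \<in> FF I"
    obtain h' where h': "h' \<in> FF I" "h \<subseteq>\<^sub>m h'" "finite (Ih h' - X)"
      using X h unfolding density_filter_def by blast
    have "infinite (Ih h')" using Ih_inf[OF ind h'(1)] .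
    moreover have "Ih h' \<subseteq> (Ih h' - X) \<union> (Ih h' \<inter> X)" by blast
    ultimately have "infinite (Ih h' \<inter> X)" using h'(3) by (metis inf_split sup_commute)
    moreover have "Ih h' \<inter> X \<subseteq> X \<inter> Ih h" using Ih_mono[OF h'(2)] by auto
    ultimately show "infinite (X \<inter> Ih h)" by (metis finite_subset)
  qed
  have "{} \<notin> density_filter I" unfolding density_filter_def by simp
  then show ?thesis unfolding set_filter_def using univ int up meets by (intro conjI allI impI; blast?)
qed

lemma gen_filter:
  assumes F: "set_filter F" and mF: "meets_all_Ih I F"
    and Y: "\<And>Z g. Z \<in> F \<Longrightarrow> g \<in> FF I \<Longrightarrow> infinite (Z \<inter> Y \<inter> Ih g)"
  defines "G \<equiv> {W. \<exists>Z\<in>F. Z \<inter> Y \<subseteq> W}"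
  shows "set_filter G \<and> meets_all_Ih I G \<and> F \<subseteq> G \<and> Y \<in> G"
proof -
  have univF: "UNIV \<in> F" using F unfolding set_filter_def by blast
  have intF: "\<And>X Z. X \<in> F \<Longrightarrow> Z \<in> F \<Longrightarrow> X \<inter> Z \<in> F" using F unfolding set_filter_def by blast
  have "UNIV \<in> G" unfolding G_def using univF by blast
  moreover have "{} \<notin> G"
  proof
    assume "{} \<in> G"
    then obtain Z where "Z \<in> F" "Z \<inter> Y \<subseteq> {}" unfolding G_def by blast
    with Y[of Z Map.empty] show False by simp
  qed
  moreover have "\<forall>X W. X \<in> G \<and> W \<in> G \<longrightarrow> X \<inter> W \<in> G"
  proof (intro allI impI)
    fix X W assume "X \<in> G \<and> W \<in> G"
    then obtain Z1 Z2 where "Z1 \<in> F" "Z1 \<inter> Y \<subseteq> X" "Z2 \<in> F" "Z2 \<inter> Y \<subseteq> W" unfolding G_def by blast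
    then show "X \<inter> W \<in> G" unfolding G_def using intF by (intro CollectI bexI[of _ "Z1 \<inter> Z2"]) auto
  qed
  moreover have "\<forall>X W. X \<in> G \<and> X \<subseteq> W \<longrightarrow> W \<in> G" unfolding G_def by blast
  moreover have "meets_all_Ih I G"
    unfolding meets_all_Ih_def
  proof (intro ballI)
    fix W g assume "W \<in> G" "g \<in> FF I"
    then obtain Z where "Z \<in> F" "Z \<inter> Y \<subseteq> W" unfolding G_def by blast
    with Y[of Z g] \<open>g \<in> FF I\<close> show "infinite (W \<inter> Ih g)"
      by (metis Int_mono finite_subset order_refl)
  qed
  moreover have "F \<subseteq> G" unfolding G_def by blast
  moreover have "Y \<in> G" unfolding G_def using univF by blast
  ultimately show ?thesis unfolding set_filter_def by blast
qed

lemma diag_contains_fil: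
  assumes ind: "independent I" and D: "diagonalization_filter I F"
  shows "density_filter I \<subseteq> F"
proof
  fix X assume X: "X \<in> density_filter I"
  have F: "set_filter F" and mF: "meets_all_Ih I F" using D unfolding diagonalization_filter_def by auto
  have Y: "infinite (Z \<inter> X \<inter> Ih g)" if Z: "Z \<in> F" and g: "g \<in> FF I" for Z g
  proof -
    obtain h' where h': "h' \<in> FF I" "g \<subseteq>\<^sub>m h'" "finite (Ih h' - X)"
      using X g unfolding density_filter_def by blast
    have "infinite (Z \<inter> Ih h')" using mF Z h' unfolding meets_all_Ih_def by blast
    moreover have "Z \<inter> Ih h' \<subseteq> (Z \<inter> X \<inter> Ih g) \<union> (Ih h' - X)" using Ih_mono[OF h'(2)] by auto
    ultimately show ?thesis using h'(3) finite_subset by blast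
  qed
  define G where "G = {W. \<exists>Z\<in>F. Z \<inter> X \<subseteq> W}"
  have "set_filter G \<and> meets_all_Ih I G \<and> F \<subseteq> G \<and> X \<in> G"
    using gen_filter[OF F mF Y] unfolding G_def by blast
  then have "G = F" using D unfolding diagonalization_filter_def by blast
  then show "X \<in> F" using \<open>set_filter G \<and> meets_all_Ih I G \<and> F \<subseteq> G \<and> X \<in> G\<close> by blast
qed

lemma compat:
  assumes g: "g \<in> FF I" and h: "h \<in> FF I" and x: "x \<in> Ih g" "x \<in> Ih h"
  shows "g \<subseteq>\<^sub>m g ++ h"
  unfolding map_le_def
proof (intro ballI)
  fix A assume A: "A \<in> dom g"
  show "g A = (g ++ h) A"
  proof (cases "A \<in> dom h")
    case False then have "h A = None" by (simp add: domIff)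
    then show ?thesis by (simp add: map_add_def)
  next
    case True
    obtain u where u: "g A = Some u" using A by auto
    obtain v where v: "h A = Some v" using True by auto
    have "u \<in> {0,1}" "v \<in> {0,1}" using g h u v unfolding FF_def ran_def by auto
    moreover have "x \<in> power_set A u" using x(1) A u unfolding Ih_def by force
    moreover have "x \<in> power_set A v" using x(2) True v unfolding Ih_def by force
    ultimately have "u = v" unfolding power_set_def by auto
    then show ?thesis using u v by simp
  qed
qed

theorem lemma2p3:
  assumes "independent \<I>"
  shows "densely_maximal \<I> \<longleftrightarrow>
           ((\<exists>!F. diagonalization_filter \<I> F) \<and> diagonalization_filter \<I> (density_filter \<I>))"
proof
  assume dm: "densely_maximal \<I>"
  have fp: "set_filter (density_filter \<I>) \<and> meets_all_Ih \<I> (density_filter \<I>)"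
    using fil_props[OF assms] .
  have maxl: "G = density_filter \<I>" if G: "set_filter G" "meets_all_Ih \<I> G" "density_filter \<I> \<subseteq> G" for G
  proof
    show "G \<subseteq> density_filter \<I>"
    proof
      fix X assume X: "X \<in> G"
      have "infinite (X \<inter> Ih Map.empty)" using G(2) X empty_FF unfolding meets_all_Ih_def by blast
      then have infX: "infinite X" by simp
      have "\<forall>h\<in>FF \<I>. \<exists>h'\<in>FF \<I>. h \<subseteq>\<^sub>m h' \<and> finite (Ih h' - X)"
      proof
        fix h assume h: "h \<in> FF \<I>"
        obtain h' where h': "h' \<in> FF \<I>" "h \<subseteq>\<^sub>m h'" "finite (Ih h' - X) \<or> finite (Ih h' \<inter> X)"
          using dm infX h unfolding densely_maximal_def by blast
        have "infinite (X \<inter> Ih h')" using G(2) X h'(1) unfolding meets_all_Ih_def by blast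
        then show "\<exists>h'\<in>FF \<I>. h \<subseteq>\<^sub>m h' \<and> finite (Ih h' - X)" using h'
          by (auto simp: Int_commute)
      qed
      then show "X \<in> density_filter \<I>" using infX unfolding density_filter_def by blast
    qed
  qed (use G in auto)
  have D: "diagonalization_filter \<I> (density_filter \<I>)"
    unfolding diagonalization_filter_def using fp maxl by blast
  have "\<exists>!F. diagonalization_filter \<I> F"
  proof (rule ex1I[of _ "density_filter \<I>"])
    show "diagonalization_filter \<I> (density_filter \<I>)" by (rule D)
  next
    fix F assume F: "diagonalization_filter \<I> F"
    then show "F = density_filter \<I>" using maxl diag_contains_fil[OF assms F]
      unfolding diagonalization_filter_def by blast
  qed
  then show "(\<exists>!F. diagonalization_filter \<I> F) \<and> diagonalization_filter \<I> (density_filter \<I>)"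
    using D by blast
next
  assume R: "(\<exists>!F. diagonalization_filter \<I> F) \<and> diagonalization_filter \<I> (density_filter \<I>)"
  then have D: "diagonalization_filter \<I> (density_filter \<I>)" by blast
  have F: "set_filter (density_filter \<I>)" and mF: "meets_all_Ih \<I> (density_filter \<I>)"
    using D unfolding diagonalization_filter_def by auto
  show "densely_maximal \<I>"
    unfolding densely_maximal_def
  proof (rule ccontr)
    assume "\<not> (\<forall>X. infinite X \<longrightarrow> (\<forall>h\<in>FF \<I>. \<exists>h'\<in>FF \<I>. h \<subseteq>\<^sub>m h' \<and>
      (finite (Ih h' - X) \<or> finite (Ih h' \<inter> X))))"
    then obtain X h where h: "h \<in> FF \<I>"
      and bad: "\<And>h'. h' \<in> FF \<I> \<Longrightarrow> h \<subseteq>\<^sub>m h' \<Longrightarrow> infinite (Ih h' - X) \<and> infinite (Ih h' \<inter> X)"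
      by blast
    define Y where "Y = X \<union> (UNIV - Ih h)"
    have Yinf: "infinite (Z \<inter> Y \<inter> Ih g)" if Z: "Z \<in> density_filter \<I>" and g: "g \<in> FF \<I>" for Z g
    proof (cases "Ih g \<inter> Ih h = {}")
      case True
      then have "Z \<inter> Ih g \<subseteq> Z \<inter> Y \<inter> Ih g" unfolding Y_def by auto
      moreover have "infinite (Z \<inter> Ih g)" using mF Z g unfolding meets_all_Ih_def by blast
      ultimately show ?thesis using finite_subset by blast
    next
      case False
      then obtain x where x: "x \<in> Ih g" "x \<in> Ih h" by blast
      define k where "k = g ++ h"
      have k1: "g \<subseteq>\<^sub>m k" unfolding k_def using compat[OF g h x] .
      have k2: "h \<subseteq>\<^sub>m k" unfolding k_def by (rule map_le_map_add)
      have "ran k \<subseteq> ran g \<union> ran h" unfolding k_def ran_def map_add_def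
        by (auto split: option.splits)
      then have kF: "k \<in> FF \<I>" using g h unfolding FF_def k_def by auto
      obtain k' where k': "k' \<in> FF \<I>" "k \<subseteq>\<^sub>m k'" "finite (Ih k' - Z)"
        using Z kF unfolding density_filter_def by blast
      have hk': "h \<subseteq>\<^sub>m k'" using k2 k'(2) map_le_trans by blast
      have gk': "g \<subseteq>\<^sub>m k'" using k1 k'(2) map_le_trans by blast
      have "infinite (Ih k' \<inter> X)" using bad[OF k'(1) hk'] by blast
      moreover have "Ih k' \<inter> X \<subseteq> (Z \<inter> Y \<inter> Ih g) \<union> (Ih k' - Z)"
        using Ih_mono[OF gk'] unfolding Y_def by auto
      ultimately show ?thesis using k'(3) finite_subset by blast
    qed
    define G where "G = {W. \<exists>Z\<in>density_filter \<I>. Z \<inter> Y \<subseteq> W}"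
    have GP: "set_filter G \<and> meets_all_Ih \<I> G \<and> density_filter \<I> \<subseteq> G \<and> Y \<in> G"
      using gen_filter[OF F mF Yinf] unfolding G_def by blast
    then have "G = density_filter \<I>" using D unfolding diagonalization_filter_def by blast
    with GP have "Y \<in> density_filter \<I>" by blast
    then obtain h' where h': "h' \<in> FF \<I>" "h \<subseteq>\<^sub>m h'" "finite (Ih h' - Y)"
      using h unfolding density_filter_def by blast
    have "Ih h' - Y = Ih h' - X" using Ih_mono[OF h'(2)] unfolding Y_def by auto
    then show False using bad[OF h'(1,2)] h'(3) by simp
  qed
qed

end
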